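(* Let $K\ge1$, $\bar P_1,\dots,\bar P_K>0$ and $0<h_1<h_2<\dots<h_K$. Consider maximizing over $\mathbf P\in\mathcal P=\{\mathbf P:0\le P_k\le\bar P_k\ \forall k\}$ the quantity $$f(\mathbf P)=\tfrac12\log\Big(1+\sum_{k=1}^KP_k\Big)-\tfrac12\log\Big(1+\sum_{k=1}^Kh_kP_k\Big).$$ Set $h_0=0$, $\bar P_0=0$, $h_{K+1}=+\infty$, and for $0\le T\le K$ let $\phi_T=\frac{1+\sum_{k=0}^Th_k\bar P_k}{1+\sum_{k=0}^T\bar P_k}$. Then there is a (unique) index $T\in\{0,\dots,K\}$ with $h_T<\phi_T\le h_{T+1}$, and the allocation $P^*_k=\bar P_k$ for $k\le T$, $P^*_k=0$ for $k>T$ maximizes $f$ over $\mathcal P$ (hence also maximizes the secrecy sum-rate $[f(\mathbf P)]^+$ of the superposition region).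
   Context: $\log$ is base 2; $[x]^+=\max\{x,0\}$. The quantity $[f(\mathbf P)]^+$ is the secrecy sum-rate bound $\sum_k R^s_k\le[C^M_{\mathcal K}(\mathbf P)-C^W_{\mathcal K}(\mathbf P)]^+$ of the superposition region of the standardized Gaussian multiple-access wire-tap channel, where user $k$ has (standardized) eavesdropper gain $h_k$ and the intended receiver's gains are all 1. *)

theory Defs
  imports "HOL-Analysis.Analysis"
begin

text \<open>Users are indexed by 1..K; values of functions at other indices are irrelevant.\<close>

definition secf :: "nat \<Rightarrow> (nat \<Rightarrow> real) \<Rightarrow> (nat \<Rightarrow> real) \<Rightarrow> real" where
  "secf K h P = (1/2) * log 2 (1 + (\<Sum>k=1..K. P k)) - (1/2) * log 2 (1 + (\<Sum>k=1..K. h k * P k))"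

definition feasible :: "nat \<Rightarrow> (nat \<Rightarrow> real) \<Rightarrow> (nat \<Rightarrow> real) set" where
  "feasible K Pbar = {P. \<forall>k\<in>{1..K}. 0 \<le> P k \<and> P k \<le> Pbar k}"

text \<open>phi_T; the k = 0 terms vanish since h_0 = 0 and Pbar_0 = 0.\<close>
definition phi :: "(nat \<Rightarrow> real) \<Rightarrow> (nat \<Rightarrow> real) \<Rightarrow> nat \<Rightarrow> real" where
  "phi h Pbar T = (1 + (\<Sum>k=1..T. h k * Pbar k)) / (1 + (\<Sum>k=1..T. Pbar k))"

definition hext :: "nat \<Rightarrow> (nat \<Rightarrow> real) \<Rightarrow> nat \<Rightarrow> ereal" where
  "hext K h k = (if k = 0 then 0 else if k \<le> K then ereal (h k) else \<infinity>)"

definition threshold_idx :: "nat \<Rightarrow> (nat \<Rightarrow> real) \<Rightarrow> (nat \<Rightarrow> real) \<Rightarrow> nat \<Rightarrow> bool" where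
  "threshold_idx K h Pbar T \<longleftrightarrow> T \<le> K \<and> hext K h T < ereal (phi h Pbar T)
      \<and> ereal (phi h Pbar T) \<le> hext K h (Suc T)"

end

theory Submission
  imports Defs
begin

lemma med_le:
  fixes A B c p :: real
  assumes "B > 0" "p > 0" "A / B \<le> c"
  shows "(A + c*p)/(B+p) \<le> c"
proof -
  have "A \<le> c*B" using assms by (simp add: divide_le_eq)
  then have "A + c*p \<le> c*(B+p)" by (simp add: algebra_simps)
  then show ?thesis using assms by (simp add: divide_le_eq)
qed

lemma med_gt:
  fixes A B c p :: real
  assumes "B > 0" "p > 0" "c < A / B"
  shows "c < (A + c*p)/(B+p)"
proof -
  have "c*B < A" using assms by (simp add: less_divide_eq)
  then have "c*(B+p) < A + c*p" by (simp add: algebra_simps)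
  then show ?thesis using assms by (simp add: less_divide_eq)
qed

lemma phi_Suc:
  "phi h Pbar (Suc t) = ((1 + (\<Sum>k=1..t. h k * Pbar k)) + h (Suc t) * Pbar (Suc t))
      / ((1 + (\<Sum>k=1..t. Pbar k)) + Pbar (Suc t))"
  unfolding phi_def by (simp add: add.assoc)

lemma den_pos:
  fixes K t :: nat and Pbar :: "nat \<Rightarrow> real"
  assumes "\<And>k. k \<in> {1..K} \<Longrightarrow> Pbar k > 0" "t \<le> K"
  shows "(1 + (\<Sum>k=1..t. Pbar k)) > (0::real)"
proof -
  have "(\<Sum>k=1..t. Pbar k) \<ge> 0" proof (rule sum_nonneg)
    fix x assume "x \<in> {1..t}"
    then have "Pbar x > 0" using assms(1)[of x] assms(2) by auto
    then show "Pbar x \<ge> 0" by simp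
  qed
  then show ?thesis by simp
qed

lemma phi_def2: "phi h Pbar t = (1 + (\<Sum>k=1..t. h k * Pbar k)) / (1 + (\<Sum>k=1..t. Pbar k))"
  by (simp add: phi_def)

theorem theorem3:
  fixes K :: nat and h Pbar :: "nat \<Rightarrow> real"
  assumes K1: "K \<ge> 1"
    and Pp: "\<And>k. k \<in> {1..K} \<Longrightarrow> Pbar k > 0"
    and h1: "h 1 > 0"
    and hm: "\<And>i j. i \<in> {1..K} \<Longrightarrow> j \<in> {1..K} \<Longrightarrow> i < j \<Longrightarrow> h i < h j"
  shows "(\<exists>!T. threshold_idx K h Pbar T)
    \<and> (\<forall>T. threshold_idx K h Pbar T \<longrightarrow>
         (let Pstar = (\<lambda>k. if k \<le> T then Pbar k else 0) in
            Pstar \<in> feasible K Pbar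
          \<and> (\<forall>P\<in>feasible K Pbar. secf K h P \<le> secf K h Pstar)
          \<and> (\<forall>P\<in>feasible K Pbar. max (secf K h P) 0 \<le> max (secf K h Pstar) 0)))"
proof -
  have hle: "h i \<le> h j" if "i \<in> {1..K}" "j \<in> {1..K}" "i \<le> j" for i j
    using hm[of i j] that by (cases "i = j") auto
  have hpos: "h k > 0" if "k \<in> {1..K}" for k
    using hle[of 1 k] that h1 K1 by auto
  have step_le: "phi h Pbar (Suc t) \<le> h (Suc t)" if "Suc t \<le> K" "phi h Pbar t \<le> h (Suc t)" for t
  proof -
    have B: "(1 + (\<Sum>k=1..t. Pbar k)) > 0" using den_pos[OF Pp, of t] that by auto
    have p: "Pbar (Suc t) > 0" using Pp that by auto
    show ?thesis unfolding phi_Suc using med_le[OF B p, of "1 + (\<Sum>k=1..t. h k * Pbar k)" "h (Suc t)"] that(2)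
      by (simp add: phi_def2 mult.commute)
  qed
  have step_gt: "h (Suc t) < phi h Pbar (Suc t)" if "Suc t \<le> K" "h (Suc t) < phi h Pbar t" for t
  proof -
    have B: "(1 + (\<Sum>k=1..t. Pbar k)) > 0" using den_pos[OF Pp, of t] that by auto
    have p: "Pbar (Suc t) > 0" using Pp that by auto
    show ?thesis unfolding phi_Suc using med_gt[OF B p, of "h (Suc t)" "1 + (\<Sum>k=1..t. h k * Pbar k)"] that(2)
      by (simp add: phi_def2 mult.commute)
  qed
  define c2 where "c2 t \<longleftrightarrow> ereal (phi h Pbar t) \<le> hext K h (Suc t)" for t
  have c2K: "c2 K" by (simp add: c2_def hext_def)
  define T0 where "T0 = (LEAST t. c2 t)"
  have T0c: "c2 T0" using LeastI[of c2 K, OF c2K] T0_def by simp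
  have T0K: "T0 \<le> K" using Least_le[of c2 K, OF c2K] T0_def by simp
  have T0c1: "hext K h T0 < ereal (phi h Pbar T0)"
  proof (cases T0)
    case 0
    then show ?thesis by (simp add: hext_def phi_def)
  next
    case (Suc t)
    have "\<not> c2 t" using not_less_Least[of t c2] T0_def Suc by simp
    then have "h (Suc t) < phi h Pbar t" using Suc T0K by (simp add: c2_def hext_def)
    then have "h (Suc t) < phi h Pbar (Suc t)" using step_gt Suc T0K by simp
    then show ?thesis using Suc T0K by (simp add: hext_def)
  qed
  have ex: "threshold_idx K h Pbar T0"
    using T0c T0c1 T0K by (simp add: threshold_idx_def c2_def)
  have noless: "False" if "threshold_idx K h Pbar T" "threshold_idx K h Pbar T'" "T < T'" for T T'
  proof -
    have TK: "T' \<le> K" using that by (simp add: threshold_idx_def)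
    have c: "phi h Pbar T \<le> h (Suc T)"
      using that TK by (simp add: threshold_idx_def hext_def)
    have "phi h Pbar t \<le> h t" if "Suc T \<le> t" "t \<le> K" for t
      using that
    proof (induction t rule: dec_induct)
      case base
      then show ?case using step_le[of T] c by simp
    next
      case (step n)
      have "h n < h (Suc n)" using hm[of n "Suc n"] step K1 by auto
      then show ?case using step step_le[of n] by simp
    qed
    then have "phi h Pbar T' \<le> h T'" using that TK by simp
    moreover have "h T' < phi h Pbar T'" using that(2) that(3) TK
      by (simp add: threshold_idx_def hext_def split: if_splits)
    ultimately show False by simp
  qed
  have uniq: "\<exists>!T. threshold_idx K h Pbar T"
  proof (rule ex1I[of _ T0])
    show "threshold_idx K h Pbar T0" by (rule ex)
  next
    fix T assume t: "threshold_idx K h Pbar T"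
    show "T = T0"
    proof (rule ccontr)
      assume "T \<noteq> T0"
      then have "T < T0 \<or> T0 < T" by arith
      then show False using noless[OF t ex] noless[OF ex t] by blast
    qed
  qed
  have opt: "(let Pstar = (\<lambda>k. if k \<le> T then Pbar k else 0) in
            Pstar \<in> feasible K Pbar
          \<and> (\<forall>P\<in>feasible K Pbar. secf K h P \<le> secf K h Pstar)
          \<and> (\<forall>P\<in>feasible K Pbar. max (secf K h P) 0 \<le> max (secf K h Pstar) 0))"
    if thr: "threshold_idx K h Pbar T" for T
  proof -
    define Ps where "Ps = (\<lambda>k. if k \<le> T then Pbar k else (0::real))"
    define ph where "ph = phi h Pbar T"
    have TK: "T \<le> K" using thr by (simp add: threshold_idx_def)
    have B0: "(1 + (\<Sum>k=1..T. Pbar k)) > 0" using den_pos[OF Pp TK] .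
    have phi_eq: "ph * (1 + (\<Sum>k=1..T. Pbar k)) = 1 + (\<Sum>k=1..T. h k * Pbar k)"
      using B0 by (simp add: ph_def phi_def)
    have lowk: "h k < ph" if "k \<in> {1..T}" for k
    proof -
      have "h T < ph" using thr that by (simp add: threshold_idx_def hext_def ph_def split: if_splits)
      moreover have "h k \<le> h T" using hle[of k T] that TK by auto
      ultimately show ?thesis by simp
    qed
    have highk: "ph \<le> h k" if "k \<in> {Suc T..K}" for k
    proof -
      have "ph \<le> h (Suc T)" using thr that by (simp add: threshold_idx_def hext_def ph_def)
      moreover have "h (Suc T) \<le> h k" using hle[of "Suc T" k] that by auto
      ultimately show ?thesis by simp
    qed
    have split: "(\<Sum>k=1..K. f k) = (\<Sum>k=1..T. f k) + (\<Sum>k=Suc T..K. f k)" for f :: "nat \<Rightarrow> real"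
    proof -
      have "{1..K} = {1..T} \<union> {Suc T..K}" using TK by auto
      then show ?thesis by (simp add: sum.union_disjoint) 
    qed
    have feas: "Ps \<in> feasible K Pbar"
      unfolding feasible_def Ps_def using Pp by (auto simp: less_imp_le)
    have sPs: "(\<Sum>k=1..K. Ps k) = (\<Sum>k=1..T. Pbar k)"
      unfolding split Ps_def by simp
    have shPs: "(\<Sum>k=1..K. h k * Ps k) = (\<Sum>k=1..T. h k * Pbar k)"
      unfolding split Ps_def by simp
    have key: "ph * (1 + (\<Sum>k=1..K. P k)) \<le> 1 + (\<Sum>k=1..K. h k * P k)"
      if P: "P \<in> feasible K Pbar" for P
    proof -
      have "(\<Sum>k=1..K. (h k - ph) * P k) \<ge> (\<Sum>k=1..K. if k \<le> T then (h k - ph) * Pbar k else 0)"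
      proof (rule sum_mono)
        fix k assume k: "k \<in> {1..K}"
        have Pk: "0 \<le> P k" "P k \<le> Pbar k" using P k by (auto simp: feasible_def)
        show "(if k \<le> T then (h k - ph) * Pbar k else 0) \<le> (h k - ph) * P k"
        proof (cases "k \<le> T")
          case True
          then have "h k - ph \<le> 0" using lowk[of k] k by auto
          then show ?thesis using True Pk by (simp add: mult_left_mono_neg)
        next
          case False
          then have "h k - ph \<ge> 0" using highk[of k] k by auto
          then show ?thesis using False Pk by simp
        qed
      qed
      also have "(\<Sum>k=1..K. if k \<le> T then (h k - ph) * Pbar k else 0) = (\<Sum>k=1..T. (h k - ph) * Pbar k)"
        unfolding split by simp
      also have "\<dots> = (\<Sum>k=1..T. h k * Pbar k) - ph * (\<Sum>k=1..T. Pbar k)"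
        by (simp add: algebra_simps sum_subtractf sum_distrib_left)
      also have "\<dots> = ph - 1" using phi_eq by (simp add: algebra_simps)
      finally have "ph - 1 \<le> (\<Sum>k=1..K. h k * P k) - ph * (\<Sum>k=1..K. P k)"
        by (simp add: algebra_simps sum_subtractf sum_distrib_left)
      then show ?thesis by (simp add: algebra_simps)
    qed
    have main: "secf K h P \<le> secf K h Ps" if P: "P \<in> feasible K Pbar" for P
    proof -
      define B where "B = 1 + (\<Sum>k=1..K. P k)"
      define A where "A = 1 + (\<Sum>k=1..K. h k * P k)"
      define Bs where "Bs = 1 + (\<Sum>k=1..T. Pbar k)"
      define As where "As = 1 + (\<Sum>k=1..T. h k * Pbar k)"
      have Pk: "0 \<le> P k" "P k \<le> Pbar k" if "k \<in> {1..K}" for k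
        using P that by (auto simp: feasible_def)
      have "(\<Sum>k=1..K. P k) \<ge> 0" by (rule sum_nonneg) (use Pk in auto)
      then have Bp: "B > 0" unfolding B_def by simp
      have "(\<Sum>k=1..K. h k * P k) \<ge> 0"
      proof (rule sum_nonneg)
        fix x assume x: "x \<in> {1..K}"
        have "h x > 0" "P x \<ge> 0" using hpos[OF x] Pk[OF x] by auto
        then show "h x * P x \<ge> 0" by simp
      qed
      then have Ap: "A > 0" unfolding A_def by simp
      have Bsp: "Bs > 0" using B0 Bs_def by simp
      have "(\<Sum>k=1..T. h k * Pbar k) \<ge> 0"
      proof (rule sum_nonneg)
        fix k assume "k \<in> {1..T}"
        then have "h k > 0" "Pbar k > 0" using hpos Pp TK by auto
        then show "h k * Pbar k \<ge> 0" by simp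
      qed
      then have Asp: "As > 0" unfolding As_def by simp
      have As_eq: "As = ph * Bs" using phi_eq As_def Bs_def by simp
      have "B * As \<le> Bs * A"
      proof -
        have "B * As = ph * B * Bs" using As_eq by simp
        also have "\<dots> \<le> A * Bs" using key[OF P] Bsp unfolding A_def B_def
          by (intro mult_right_mono) auto
        finally show ?thesis by (simp add: mult.commute)
      qed
      then have "log 2 (B * As) \<le> log 2 (Bs * A)"
        using Bp Asp Bsp Ap by simp
      then have "log 2 B - log 2 A \<le> log 2 Bs - log 2 As"
        using Bp Asp Bsp Ap by (simp add: log_mult)
      then show ?thesis unfolding secf_def sPs shPs A_def B_def As_def Bs_def by simp
    qed
    show ?thesis unfolding Let_def Ps_def[symmetric]
      using feas main by (force simp: max_def)
  qed
  show ?thesis using uniq opt by blast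
qed

end
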